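(* Let $\mathcal C$ be a Clifford circuit with $m$ measurements. The map $\mathbb Z_2^m\to\overline{\mathcal P}_{n(\Delta+1)}$, $u\mapsto\overleftarrow{F(u)}$, is an injective group morphism.
   Context: A Clifford circuit on $n$ qubits is a finite sequence of operations, each a unitary Clifford gate or the measurement of a Hermitian $n$-qubit Pauli, each with a level in $\{1,2,\dots\}$; operations of equal level have disjoint supports and levels are nondecreasing; depth $\Delta$ = maximal level. In circuit order the $j$-th measurement measures $S_j$ at level $\ell_j$, $j=1,\dots,m$. $\overline{\mathcal P}_N$ is the $N$-qubit Pauli group modulo phases. $U_\ell$ is the product of the unitary gates of level $\ell$ (identity if none). A fault operator $F\in\overline{\mathcal P}_{n(\Delta+1)}$ acts on qubits $(\ell+0.5,q)$, $0\le\ell\le\Delta$, $1\le q\le n$; $F_{\ell+0.5}$ is its level-$(\ell+0.5)$ component; $\eta_{\ell+0.5}(P)$ is the fault operator equal to $P\in\overline{\mathcal P}_n$ at level $\ell+0.5$ and $I$ elsewhere. Back-cumulant $\overleftarrow F$: start with $\overleftarrow F=F$; for $\ell=\Delta,\dots,1$ replace $\overleftarrow F_{\ell-0.5}$ by $\overleftarrow F_{\ell-0.5}\cdot U_\ell^{-1}\overleftarrow F_{\ell+0.5}U_\ell$. For $u\in\mathbb Z_2^m$, $F(u)=\prod_{j=1}^m\eta_{\ell_j-0.5}(S_j^{u_j})$. *)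

theory Defs
  imports "HOL-Analysis.Analysis" "Jordan_Normal_Form.Schur_Decomposition"
begin

text \<open>An element of the n-qubit Pauli group modulo phases is represented by its
  canonical representative X^x Z^z, i.e. by the pair of bits (x_q, z_q) on each qubit
  q < n (all other qubits carry (False, False)).\<close>

type_synonym pauli = "nat \<Rightarrow> bool \<times> bool"

definition pauli_I :: pauli where "pauli_I = (\<lambda>q. (False, False))"

definition pauli_valid :: "nat \<Rightarrow> pauli \<Rightarrow> bool" where
  "pauli_valid n P \<longleftrightarrow> (\<forall>q\<ge>n. P q = (False, False))"

definition pauli_mult :: "pauli \<Rightarrow> pauli \<Rightarrow> pauli" where
  "pauli_mult P Q = (\<lambda>q. (fst (P q) \<noteq> fst (Q q), snd (P q) \<noteq> snd (Q q)))"

definition pauli_supp :: "pauli \<Rightarrow> nat set" where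
  "pauli_supp P = {q. P q \<noteq> (False, False)}"

text \<open>The 2^n x 2^n complex matrix X^x Z^z (tensor product over qubits 0..n-1; qubit q
  corresponds to bit q of the computational basis index):
  X^x Z^z |c> = (-1)^(z.c) |c xor x>.\<close>

definition pauli_mat :: "nat \<Rightarrow> pauli \<Rightarrow> complex mat" where
  "pauli_mat n P = mat (2^n) (2^n) (\<lambda>(r, c).
     if (\<forall>q<n. bit r q = (bit c q \<noteq> fst (P q)))
     then (\<Prod>q<n. if snd (P q) \<and> bit c q then -1 else 1)
     else 0)"

definition pauli_single :: "nat \<Rightarrow> bool \<times> bool \<Rightarrow> pauli" where
  "pauli_single q ab = pauli_I(q := ab)"

definition unitary_mat :: "nat \<Rightarrow> complex mat \<Rightarrow> bool" where
  "unitary_mat n U \<longleftrightarrow> U \<in> carrier_mat (2^n) (2^n) \<and> U * mat_adjoint U = 1\<^sub>m (2^n)"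

definition clifford :: "nat \<Rightarrow> complex mat \<Rightarrow> bool" where
  "clifford n U \<longleftrightarrow> unitary_mat n U \<and>
     (\<forall>P. pauli_valid n P \<longrightarrow>
        (\<exists>Q c. pauli_valid n Q \<and> U * pauli_mat n P * mat_adjoint U = c \<cdot>\<^sub>m pauli_mat n Q))"

text \<open>Action P \<mapsto> U^{-1} P U on Paulis modulo phases: the unique Q (mod phase) with
  U Q = c P U for some scalar c, i.e. Q = c U^{-1} P U.\<close>
definition conj_inv :: "nat \<Rightarrow> complex mat \<Rightarrow> pauli \<Rightarrow> pauli" where
  "conj_inv n U P = (THE Q. pauli_valid n Q \<and>
      (\<exists>c. U * pauli_mat n Q = c \<cdot>\<^sub>m (pauli_mat n P * U)))"

text \<open>Support of a unitary: the qubits on which it acts nontrivially, i.e. the qubits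
  q < n such that U does not commute with all operators on qubit q (equivalently
  with X_q and Z_q).\<close>
definition unitary_supp :: "nat \<Rightarrow> complex mat \<Rightarrow> nat set" where
  "unitary_supp n U = {q. q < n \<and>
     \<not> (U * pauli_mat n (pauli_single q (True, False)) = pauli_mat n (pauli_single q (True, False)) * U
        \<and> U * pauli_mat n (pauli_single q (False, True)) = pauli_mat n (pauli_single q (False, True)) * U)}"

datatype operation = Gate "complex mat" | Meas pauli

text \<open>A circuit is a list of (level, operation) pairs in circuit order.\<close>
type_synonym circuit = "(nat \<times> operation) list"

fun op_supp :: "nat \<Rightarrow> operation \<Rightarrow> nat set" where
  "op_supp n (Gate U) = unitary_supp n U"
| "op_supp n (Meas S) = pauli_supp S"

fun op_valid :: "nat \<Rightarrow> operation \<Rightarrow> bool" where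
  "op_valid n (Gate U) = clifford n U"
| "op_valid n (Meas S) = pauli_valid n S"

definition clifford_circuit :: "nat \<Rightarrow> circuit \<Rightarrow> bool" where
  "clifford_circuit n C \<longleftrightarrow>
     (\<forall>(l, opr) \<in> set C. 1 \<le> l \<and> op_valid n opr) \<and>
     sorted (map fst C) \<and>
     (\<forall>i<length C. \<forall>j<length C. i \<noteq> j \<longrightarrow> fst (C ! i) = fst (C ! j) \<longrightarrow>
        op_supp n (snd (C ! i)) \<inter> op_supp n (snd (C ! j)) = {})"

definition depth :: "circuit \<Rightarrow> nat" where
  "depth C = Max (insert 0 (set (map fst C)))"

fun is_meas :: "operation \<Rightarrow> bool" where
  "is_meas (Meas _) = True" | "is_meas (Gate _) = False"

fun meas_pauli :: "operation \<Rightarrow> pauli" where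
  "meas_pauli (Meas S) = S" | "meas_pauli (Gate _) = pauli_I"

definition meas_list :: "circuit \<Rightarrow> (nat \<times> pauli) list" where
  "meas_list C = map (\<lambda>(l, opr). (l, meas_pauli opr)) (filter (\<lambda>(l, opr). is_meas opr) C)"

definition num_meas :: "circuit \<Rightarrow> nat" where
  "num_meas C = length (meas_list C)"

text \<open>U_l: product of the unitary gates of level l, in circuit order (later gates to the
  left); identity if none.\<close>
definition level_unitary :: "nat \<Rightarrow> circuit \<Rightarrow> nat \<Rightarrow> complex mat" where
  "level_unitary n C l = foldl (\<lambda>A (k, opr). case opr of Gate U \<Rightarrow> if k = l then U * A else A | Meas _ \<Rightarrow> A)
      (1\<^sub>m (2^n)) C"

text \<open>A fault operator is a function from the level index l (standing for level l+0.5,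
  0 \<le> l \<le> depth) to n-qubit Paulis modulo phases; it is the identity for l > depth.\<close>
type_synonym fault = "nat \<Rightarrow> pauli"

definition fault_valid :: "nat \<Rightarrow> nat \<Rightarrow> fault \<Rightarrow> bool" where
  "fault_valid n \<Delta> F \<longleftrightarrow> (\<forall>l\<le>\<Delta>. pauli_valid n (F l)) \<and> (\<forall>l>\<Delta>. F l = pauli_I)"

definition fault_mult :: "fault \<Rightarrow> fault \<Rightarrow> fault" where
  "fault_mult F G = (\<lambda>l. pauli_mult (F l) (G l))"

definition eta :: "nat \<Rightarrow> pauli \<Rightarrow> fault" where
  "eta l P = (\<lambda>k. if k = l then P else pauli_I)"

text \<open>Back-cumulant.  bc_aux k is the final value of the component at level
  (depth - k) + 0.5 produced by the procedure: the top level is unchanged, and the step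
  for level l replaces the component at l-0.5 by itself times U_l^{-1} (component l+0.5) U_l.\<close>
fun bc_aux :: "nat \<Rightarrow> circuit \<Rightarrow> fault \<Rightarrow> nat \<Rightarrow> pauli" where
  "bc_aux n C F 0 = F (depth C)"
| "bc_aux n C F (Suc k) =
     pauli_mult (F (depth C - Suc k))
       (conj_inv n (level_unitary n C (depth C - k)) (bc_aux n C F k))"

definition back_cumulant :: "nat \<Rightarrow> circuit \<Rightarrow> fault \<Rightarrow> fault" where
  "back_cumulant n C F = (\<lambda>l. if l \<le> depth C then bc_aux n C F (depth C - l) else F l)"

text \<open>F(u) = prod_j eta_{l_j - 0.5}(S_j^{u_j}); level l_j - 0.5 has index l_j - 1.\<close>
definition fault_of_outcomes :: "circuit \<Rightarrow> (nat \<Rightarrow> bool) \<Rightarrow> fault" where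
  "fault_of_outcomes C u =
     foldr (\<lambda>j F. fault_mult (eta (fst (meas_list C ! j) - 1)
                               (if u j then snd (meas_list C ! j) else pauli_I)) F)
           [0..<num_meas C] (\<lambda>_. pauli_I)"

definition bitvecs :: "nat \<Rightarrow> (nat \<Rightarrow> bool) set" where
  "bitvecs m = {u. \<forall>j\<ge>m. \<not> u j}"

definition bv_add :: "(nat \<Rightarrow> bool) \<Rightarrow> (nat \<Rightarrow> bool) \<Rightarrow> nat \<Rightarrow> bool" where
  "bv_add u v = (\<lambda>j. u j \<noteq> v j)"

end

theory Submission
  imports Defs
begin


fun xb :: "nat \<Rightarrow> pauli \<Rightarrow> nat" where
  "xb 0 P = 0"
| "xb (Suc n) P = (if fst (P n) then set_bit n (xb n P) else xb n P)"

lemma bit_xb: "bit (xb n P) q \<longleftrightarrow> q < n \<and> fst (P q)"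
  by (induction n) (auto simp: bit_set_bit_iff less_Suc_eq)

lemma lt_pow_bits: "(x::nat) < 2^n \<longleftrightarrow> (\<forall>q\<ge>n. \<not> bit x q)"
proof
  assume "x < 2^n" then show "\<forall>q\<ge>n. \<not> bit x q"
    by (metis bit_take_bit_iff linorder_not_le take_bit_nat_eq_self_iff)
next
  assume h: "\<forall>q\<ge>n. \<not> bit x q"
  have "take_bit n x = x" by (rule bit_eqI) (use h not_le in \<open>auto simp: bit_take_bit_iff\<close>)
  then show "x < 2^n" by (metis take_bit_nat_eq_self_iff)
qed

lemma xb_lt: "xb n P < 2^n"
  using lt_pow_bits bit_xb by auto

lemma xor_lt: "(a::nat) < 2^n \<Longrightarrow> b < 2^n \<Longrightarrow> xor a b < 2^n"
  using lt_pow_bits by (auto simp: bit_xor_iff)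

lemma cond_iff: assumes "(r::nat) < 2^n" "c < 2^n"
  shows "(\<forall>q<n. bit r q = (bit c q \<noteq> fst (P q))) \<longleftrightarrow> r = xor c (xb n P)"
proof
  assume h: "\<forall>q<n. bit r q = (bit c q \<noteq> fst (P q))"
  show "r = xor c (xb n P)"
  proof (rule bit_eqI)
    fix q show "bit r q = bit (xor c (xb n P)) q"
    proof (cases "q < n")
      case True then show ?thesis using h by (auto simp: bit_xor_iff bit_xb)
    next
      case False then show ?thesis using assms lt_pow_bits[of r n] lt_pow_bits[of c n]
        by (auto simp: bit_xor_iff bit_xb)
    qed
  qed
qed (auto simp: bit_xor_iff bit_xb)

definition sgn_of :: "nat \<Rightarrow> pauli \<Rightarrow> nat \<Rightarrow> complex" where
  "sgn_of n P c = (\<Prod>q<n. if snd (P q) \<and> bit c q then -1 else 1)"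

lemma pm_index: "r < 2^n \<Longrightarrow> c < 2^n \<Longrightarrow>
   pauli_mat n P $$ (r, c) = (if r = xor c (xb n P) then sgn_of n P c else 0)"
  unfolding pauli_mat_def sgn_of_def using cond_iff by simp

lemma pm_carrier[simp]: "pauli_mat n P \<in> carrier_mat (2^n) (2^n)"
  unfolding pauli_mat_def by simp

lemma pm_dims[simp]: "dim_row (pauli_mat n P) = 2^n" "dim_col (pauli_mat n P) = 2^n"
  unfolding pauli_mat_def by simp_all

lemma mult_index: assumes "A \<in> carrier_mat N N" "B \<in> carrier_mat N N" "r < N" "c < N"
  shows "(A * B) $$ (r, c) = (\<Sum>i<N. A $$ (r, i) * B $$ (i, c))"
  using assms by (simp add: scalar_prod_def lessThan_atLeast0)

lemma xb_mult: "xb n (pauli_mult P Q) = xor (xb n P) (xb n Q)"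
  by (rule bit_eqI) (auto simp: bit_xor_iff bit_xb pauli_mult_def)

definition sgnk :: "nat \<Rightarrow> pauli \<Rightarrow> pauli \<Rightarrow> complex" where
  "sgnk n P Q = (\<Prod>q<n. if snd (P q) \<and> fst (Q q) then -1 else 1)"

lemma sgn_mult: "sgn_of n P (xor c (xb n Q)) * sgn_of n Q c = sgnk n P Q * sgn_of n (pauli_mult P Q) c"
  unfolding sgn_of_def sgnk_def prod.distrib[symmetric]
  by (rule prod.cong) (auto simp: bit_xor_iff bit_xb pauli_mult_def)

lemma sgnk_sq: "sgnk n P Q * sgnk n P Q = 1"
  unfolding sgnk_def prod.distrib[symmetric] by (rule prod.neutral) auto

lemma pm_mult: "pauli_mat n P * pauli_mat n Q = sgnk n P Q \<cdot>\<^sub>m pauli_mat n (pauli_mult P Q)"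
proof (rule eq_matI)
  fix r c assume rc: "r < dim_row (sgnk n P Q \<cdot>\<^sub>m pauli_mat n (pauli_mult P Q))"
     "c < dim_col (sgnk n P Q \<cdot>\<^sub>m pauli_mat n (pauli_mult P Q))"
  then have r: "r < 2^n" and c: "c < 2^n" by auto
  have "(pauli_mat n P * pauli_mat n Q) $$ (r, c)
     = (\<Sum>i<2^n. pauli_mat n P $$ (r, i) * pauli_mat n Q $$ (i, c))"
    by (rule mult_index[OF pm_carrier pm_carrier r c])
  also have "\<dots> = (\<Sum>i<2^n. if i = xor c (xb n Q) then pauli_mat n P $$ (r, i) * sgn_of n Q c else 0)"
    by (rule sum.cong) (auto simp: pm_index c)
  also have "\<dots> = pauli_mat n P $$ (r, xor c (xb n Q)) * sgn_of n Q c"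
    using xor_lt[OF c xb_lt] by (simp add: sum.delta)
  also have "\<dots> = (if r = xor c (xb n (pauli_mult P Q)) then sgn_of n P (xor c (xb n Q)) * sgn_of n Q c else 0)"
    using xor_lt[OF c xb_lt] r by (simp add: pm_index xb_mult ac_simps)
  also have "\<dots> = (sgnk n P Q \<cdot>\<^sub>m pauli_mat n (pauli_mult P Q)) $$ (r, c)"
    using r c by (simp add: pm_index sgn_mult)
  finally show "(pauli_mat n P * pauli_mat n Q) $$ (r, c) = (sgnk n P Q \<cdot>\<^sub>m pauli_mat n (pauli_mult P Q)) $$ (r, c)" .
qed auto

lemma smult_smult_m: "(a::'b::comm_semiring_1) \<cdot>\<^sub>m (b \<cdot>\<^sub>m A) = (a * b) \<cdot>\<^sub>m A"
  by (rule eq_matI) (auto simp: mult.assoc)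

lemma one_smult_m[simp]: "(1::'b::comm_semiring_1) \<cdot>\<^sub>m A = A"
  by (rule eq_matI) auto

lemma pm_mult': "pauli_mat n (pauli_mult P Q) = sgnk n P Q \<cdot>\<^sub>m (pauli_mat n P * pauli_mat n Q)"
  by (simp add: pm_mult smult_smult_m sgnk_sq)

lemma xb_I: "xb n pauli_I = 0"
  by (induction n) (auto simp: pauli_I_def)

lemma pm_I: "pauli_mat n pauli_I = 1\<^sub>m (2^n)"
  by (rule eq_matI) (auto simp: pm_index sgn_of_def xb_I, auto simp: pauli_I_def)

lemma sgn_of_0: "sgn_of n P 0 = 1"
  unfolding sgn_of_def by simp

lemma sgn_of_pow: assumes "q < n" shows "sgn_of n P (2^q) = (if snd (P q) then -1 else 1)"
proof -
  have "sgn_of n P (2^q) = (\<Prod>q'<n. if q' = q then (if snd (P q) then -1 else 1) else 1)"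
    unfolding sgn_of_def by (rule prod.cong) (auto simp: bit_exp_iff)
  also have "\<dots> = (if snd (P q) then -1 else 1)" using assms by (simp add: prod.delta)
  finally show ?thesis .
qed

lemma pm_scalar_eq: assumes vP: "pauli_valid n P" and vQ: "pauli_valid n Q"
  and eq: "pauli_mat n Q = a \<cdot>\<^sub>m pauli_mat n P"
  shows "Q = P"
proof -
  have e: "\<And>r c. r < 2^n \<Longrightarrow> c < 2^n \<Longrightarrow> pauli_mat n Q $$ (r, c) = a * pauli_mat n P $$ (r, c)"
    using eq by simp
  have z: "(0::nat) < 2^n" by simp
  have h1: "pauli_mat n Q $$ (xb n Q, 0) = 1"
    using pm_index[OF xb_lt[of n Q] z, of Q] by (simp add: sgn_of_0)
  have h2: "pauli_mat n P $$ (xb n Q, 0) = (if xb n Q = xb n P then 1 else 0)"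
    using pm_index[OF xb_lt[of n Q] z, of P] by (simp add: sgn_of_0)
  from e[OF xb_lt[of n Q] z] h1 h2 have "1 = a * (if xb n Q = xb n P then 1 else 0)"
    by simp
  then have xq: "xb n Q = xb n P" and a1: "a = 1" by (auto split: if_splits)
  have fq: "fst (Q q) = fst (P q)" if "q < n" for q
    using xq bit_xb[of n Q q] bit_xb[of n P q] that by auto
  have sq: "snd (Q q) = snd (P q)" if q: "q < n" for q
  proof -
    have p: "(2::nat)^q < 2^n" using q by simp
    have l: "xor (2^q) (xb n Q) < 2^n" using xor_lt[OF p xb_lt[of n Q]] .
    from e[OF l p] pm_index[OF l p, of Q] pm_index[OF l p, of P] show ?thesis
      by (simp add: xq a1 sgn_of_pow q split: if_splits)
  qed
  show ?thesis
  proof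
    fix q show "Q q = P q"
    proof (cases "q < n")
      case True then show ?thesis using fq sq by (simp add: prod_eq_iff)
    next
      case False then show ?thesis using vP vQ by (simp add: pauli_valid_def)
    qed
  qed
qed

lemma cm_iff: "A \<in> carrier_mat r c \<longleftrightarrow> dim_row A = r \<and> dim_col A = c"
  unfolding carrier_mat_def by blast

lemma pm_nonzero: "pauli_mat n Q \<noteq> 0 \<cdot>\<^sub>m M"
proof
  assume h: "pauli_mat n Q = 0 \<cdot>\<^sub>m M"
  have z: "(0::nat) < 2^n" by simp
  have "pauli_mat n Q $$ (xb n Q, 0) = 1"
    using pm_index[OF xb_lt[of n Q] z, of Q] by (simp add: sgn_of_0)
  moreover have "dim_row M = 2^n" "dim_col M = 2^n"
    using arg_cong[OF h, of dim_row] arg_cong[OF h, of dim_col] by auto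
  moreover have "(0 \<cdot>\<^sub>m M) $$ (xb n Q, 0) = 0"
    using calculation(2,3) xb_lt[of n Q] by (simp only: index_smult_mat) simp
  ultimately have "(1::complex) = 0" using h by simp
  then show False by simp
qed

lemma same_ray: assumes "pauli_valid n Q" "pauli_valid n Q'"
  and h: "pauli_mat n Q = c \<cdot>\<^sub>m M" and h': "pauli_mat n Q' = c' \<cdot>\<^sub>m M"
  shows "Q' = Q"
proof -
  have c: "c \<noteq> 0" using h pm_nonzero by auto
  have "pauli_mat n Q' = (c' / c) \<cdot>\<^sub>m pauli_mat n Q"
    unfolding h h' smult_smult_m using c by simp
  then show ?thesis using pm_scalar_eq assms(1,2) by blast
qed

definition inv_cliff :: "nat \<Rightarrow> complex mat \<Rightarrow> bool" where
  "inv_cliff n U \<longleftrightarrow> U \<in> carrier_mat (2^n) (2^n) \<and> (\<exists>V \<in> carrier_mat (2^n) (2^n). V * U = 1\<^sub>m (2^n))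
     \<and> (\<forall>P. pauli_valid n P \<longrightarrow> (\<exists>Q c. pauli_valid n Q \<and> U * pauli_mat n Q = c \<cdot>\<^sub>m (pauli_mat n P * U)))"

lemma inv_cliff_unique: assumes "inv_cliff n U" "pauli_valid n Q" "pauli_valid n Q'"
  and h: "U * pauli_mat n Q = c \<cdot>\<^sub>m (pauli_mat n P * U)"
  and h': "U * pauli_mat n Q' = c' \<cdot>\<^sub>m (pauli_mat n P * U)"
  shows "Q' = Q"
proof -
  let ?N = "2^n::nat"
  obtain V where V: "V \<in> carrier_mat ?N ?N" "V * U = 1\<^sub>m ?N" and U: "U \<in> carrier_mat ?N ?N"
    using assms(1) unfolding inv_cliff_def by blast
  have gen: "pauli_mat n R = d \<cdot>\<^sub>m (V * (pauli_mat n P * U))"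
    if e: "U * pauli_mat n R = d \<cdot>\<^sub>m (pauli_mat n P * U)" for R d
  proof -
    have "pauli_mat n R = (V * U) * pauli_mat n R" using V by simp
    also have "\<dots> = V * (U * pauli_mat n R)" by (rule assoc_mult_mat[OF V(1) U pm_carrier])
    also have "\<dots> = d \<cdot>\<^sub>m (V * (pauli_mat n P * U))" unfolding e
      by (rule mult_smult_distrib[OF V(1) mult_carrier_mat[OF pm_carrier U]])
    finally show ?thesis .
  qed
  show ?thesis by (rule same_ray[OF assms(2,3) gen[OF h] gen[OF h']])
qed

lemma conj_inv_prop: assumes "inv_cliff n U" "pauli_valid n P"
  shows "pauli_valid n (conj_inv n U P) \<and> (\<exists>c. U * pauli_mat n (conj_inv n U P) = c \<cdot>\<^sub>m (pauli_mat n P * U))"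
proof -
  have "\<exists>!Q. pauli_valid n Q \<and> (\<exists>c. U * pauli_mat n Q = c \<cdot>\<^sub>m (pauli_mat n P * U))"
    using assms inv_cliff_unique[OF assms(1)] unfolding inv_cliff_def by metis
  then show ?thesis unfolding conj_inv_def by (rule theI')
qed

lemma conj_inv_eq: assumes "inv_cliff n U" "pauli_valid n P" "pauli_valid n Q"
  and "U * pauli_mat n Q = c \<cdot>\<^sub>m (pauli_mat n P * U)"
  shows "conj_inv n U P = Q"
  using conj_inv_prop[OF assms(1,2)] inv_cliff_unique[OF assms(1)] assms(3,4) by metis

lemma valid_mult: "pauli_valid n P \<Longrightarrow> pauli_valid n Q \<Longrightarrow> pauli_valid n (pauli_mult P Q)"
  by (simp add: pauli_valid_def pauli_mult_def)

lemma valid_I: "pauli_valid n pauli_I"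
  by (simp add: pauli_valid_def pauli_I_def)

lemma conj_inv_I: assumes "inv_cliff n U" shows "conj_inv n U pauli_I = pauli_I"
proof (rule conj_inv_eq[OF assms valid_I valid_I, of 1])
  have "U \<in> carrier_mat (2^n) (2^n)" using assms unfolding inv_cliff_def by blast
  then show "U * pauli_mat n pauli_I = 1 \<cdot>\<^sub>m (pauli_mat n pauli_I * U)"
    using carrier_matD[OF \<open>U \<in> carrier_mat (2^n) (2^n)\<close>] by (simp add: pm_I)
qed

lemma conj_inv_mult: assumes U: "inv_cliff n U" and P1: "pauli_valid n P1" and P2: "pauli_valid n P2"
  shows "conj_inv n U (pauli_mult P1 P2) = pauli_mult (conj_inv n U P1) (conj_inv n U P2)"
proof -
  let ?N = "2^n::nat"
  define Q1 where "Q1 = conj_inv n U P1"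
  define Q2 where "Q2 = conj_inv n U P2"
  obtain c1 where v1: "pauli_valid n Q1" and e1: "U * pauli_mat n Q1 = c1 \<cdot>\<^sub>m (pauli_mat n P1 * U)"
    using conj_inv_prop[OF U P1] unfolding Q1_def by blast
  obtain c2 where v2: "pauli_valid n Q2" and e2: "U * pauli_mat n Q2 = c2 \<cdot>\<^sub>m (pauli_mat n P2 * U)"
    using conj_inv_prop[OF U P2] unfolding Q2_def by blast
  have Uc: "U \<in> carrier_mat ?N ?N" using U unfolding inv_cliff_def by blast
  let ?A1 = "pauli_mat n P1" and ?A2 = "pauli_mat n P2" and ?B1 = "pauli_mat n Q1" and ?B2 = "pauli_mat n Q2"
  have "U * pauli_mat n (pauli_mult Q1 Q2) = sgnk n Q1 Q2 \<cdot>\<^sub>m (U * (?B1 * ?B2))"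
    unfolding pm_mult' by (rule mult_smult_distrib[OF Uc mult_carrier_mat[OF pm_carrier pm_carrier]])
  also have "U * (?B1 * ?B2) = (U * ?B1) * ?B2" by (rule assoc_mult_mat[OF Uc pm_carrier pm_carrier, symmetric])
  also have "\<dots> = c1 \<cdot>\<^sub>m ((?A1 * U) * ?B2)" unfolding e1
    by (rule mult_smult_assoc_mat[OF mult_carrier_mat[OF pm_carrier Uc] pm_carrier])
  also have "(?A1 * U) * ?B2 = ?A1 * (U * ?B2)" by (rule assoc_mult_mat[OF pm_carrier Uc pm_carrier])
  also have "\<dots> = c2 \<cdot>\<^sub>m (?A1 * (?A2 * U))" unfolding e2
    by (rule mult_smult_distrib[OF pm_carrier mult_carrier_mat[OF pm_carrier Uc]])
  also have "?A1 * (?A2 * U) = (?A1 * ?A2) * U" by (rule assoc_mult_mat[OF pm_carrier pm_carrier Uc, symmetric])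
  also have "\<dots> = sgnk n P1 P2 \<cdot>\<^sub>m (pauli_mat n (pauli_mult P1 P2) * U)"
    unfolding pm_mult by (rule mult_smult_assoc_mat[OF pm_carrier Uc])
  finally have "U * pauli_mat n (pauli_mult Q1 Q2) =
     (sgnk n Q1 Q2 * (c1 * (c2 * sgnk n P1 P2))) \<cdot>\<^sub>m (pauli_mat n (pauli_mult P1 P2) * U)"
    by (simp add: smult_smult_m)
  then show ?thesis unfolding Q1_def[symmetric] Q2_def[symmetric]
    by (rule conj_inv_eq[OF U valid_mult[OF P1 P2] valid_mult[OF v1 v2]])
qed

lemma adj_carrier: "U \<in> carrier_mat N N \<Longrightarrow> mat_adjoint U \<in> carrier_mat N N"
  unfolding mat_adjoint_def by (rule carrier_matI) auto

lemma finite_valid: "finite {P. pauli_valid n P}"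
proof -
  have "{P. pauli_valid n P} \<subseteq> (\<lambda>xs q. if q < n then xs ! q else (False, False)) ` {xs. set xs \<subseteq> UNIV \<and> length xs = n}"
  proof
    fix P assume "P \<in> {P. pauli_valid n P}"
    then have v: "\<forall>q\<ge>n. P q = (False, False)" by (simp add: pauli_valid_def)
    have "P = (\<lambda>q. if q < n then map P [0..<n] ! q else (False, False))"
    proof (rule ext)
      fix q show "P q = (if q < n then map P [0..<n] ! q else (False, False))"
        using v by (cases "q < n") simp_all
    qed
    then show "P \<in> (\<lambda>xs q. if q < n then xs ! q else (False, False)) ` {xs. set xs \<subseteq> UNIV \<and> length xs = n}"
    proof (rule image_eqI)
      show "map P [0..<n] \<in> {xs. set xs \<subseteq> UNIV \<and> length xs = n}" by simp
    qed
  qed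
  moreover have "finite {xs :: (bool \<times> bool) list. set xs \<subseteq> UNIV \<and> length xs = n}"
    by (rule finite_lists_length_eq[OF finite_class.finite_UNIV])
  ultimately show ?thesis by (meson finite_imageI finite_subset)
qed

lemma conj_back: assumes U: "(U::complex mat) \<in> carrier_mat N N" and W: "W \<in> carrier_mat N N" and A: "A \<in> carrier_mat N N"
  and WU: "W * U = 1\<^sub>m N"
  shows "W * ((U * A) * W) * U = A"
proof -
  have UA: "U * A \<in> carrier_mat N N" using U A by simp
  have UAW: "(U * A) * W \<in> carrier_mat N N" using UA W by simp
  have "W * ((U * A) * W) * U = W * (((U * A) * W) * U)" by (rule assoc_mult_mat[OF W UAW U])
  also have "((U * A) * W) * U = (U * A) * (W * U)" by (rule assoc_mult_mat[OF UA W U])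
  also have "\<dots> = U * A" unfolding WU by (rule right_mult_one_mat[OF UA])
  also have "W * (U * A) = (W * U) * A" by (rule assoc_mult_mat[OF W U A, symmetric])
  also have "\<dots> = A" unfolding WU by (rule left_mult_one_mat[OF A])
  finally show ?thesis .
qed

lemma clifford_inv: assumes cl: "clifford n U" shows "inv_cliff n U"
proof -
  let ?N = "2^n::nat"
  let ?W = "mat_adjoint U"
  have Uc: "U \<in> carrier_mat ?N ?N" and UW: "U * ?W = 1\<^sub>m ?N"
    using cl unfolding clifford_def unitary_mat_def by auto
  have Wc: "?W \<in> carrier_mat ?N ?N" using adj_carrier[OF Uc] .
  have WU: "?W * U = 1\<^sub>m ?N" by (rule mat_mult_left_right_inverse[OF Uc Wc UW])
  have fwd: "\<And>P. pauli_valid n P \<Longrightarrow> \<exists>Q c. pauli_valid n Q \<and> U * pauli_mat n P * ?W = c \<cdot>\<^sub>m pauli_mat n Q"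
    using cl unfolding clifford_def by blast
  define f where "f P = (SOME Q. pauli_valid n Q \<and> (\<exists>c. U * pauli_mat n P * ?W = c \<cdot>\<^sub>m pauli_mat n Q))" for P
  have fP: "pauli_valid n (f P) \<and> (\<exists>c. U * pauli_mat n P * ?W = c \<cdot>\<^sub>m pauli_mat n (f P))"
    if "pauli_valid n P" for P
  proof -
    from fwd[OF that] have "\<exists>Q. pauli_valid n Q \<and> (\<exists>c. U * pauli_mat n P * ?W = c \<cdot>\<^sub>m pauli_mat n Q)" by blast
    then show ?thesis unfolding f_def by (rule someI_ex)
  qed
  have bck: "pauli_mat n P = c \<cdot>\<^sub>m (?W * pauli_mat n Q * U)"
    if "U * pauli_mat n P * ?W = c \<cdot>\<^sub>m pauli_mat n Q" for P Q c
  proof -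
    note e = that
    have "pauli_mat n P = ?W * (U * pauli_mat n P * ?W) * U"
      by (rule conj_back[OF Uc Wc pm_carrier WU, symmetric])
    also have "\<dots> = ?W * (c \<cdot>\<^sub>m pauli_mat n Q) * U" unfolding e ..
    also have "?W * (c \<cdot>\<^sub>m pauli_mat n Q) = c \<cdot>\<^sub>m (?W * pauli_mat n Q)"
      by (rule mult_smult_distrib[OF Wc pm_carrier])
    also have "(c \<cdot>\<^sub>m (?W * pauli_mat n Q)) * U = c \<cdot>\<^sub>m (?W * pauli_mat n Q * U)"
      by (rule mult_smult_assoc_mat[OF mult_carrier_mat[OF Wc pm_carrier] Uc])
    finally show ?thesis .
  qed
  have inj: "inj_on f {P. pauli_valid n P}"
  proof (rule inj_onI)
    fix P1 P2 assume p1: "P1 \<in> {P. pauli_valid n P}" and p2: "P2 \<in> {P. pauli_valid n P}" and eq: "f P1 = f P2"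
    obtain c1 where e1: "U * pauli_mat n P1 * ?W = c1 \<cdot>\<^sub>m pauli_mat n (f P1)" using fP p1 by blast
    obtain c2 where e2: "U * pauli_mat n P2 * ?W = c2 \<cdot>\<^sub>m pauli_mat n (f P1)" using fP[of P2] p2 eq by auto
    show "P1 = P2" using same_ray[OF _ _ bck[OF e2] bck[OF e1]] p1 p2 by blast
  qed
  have sub: "f ` {P. pauli_valid n P} \<subseteq> {P. pauli_valid n P}" using fP by blast
  have surj: "f ` {P. pauli_valid n P} = {P. pauli_valid n P}"
    by (rule endo_inj_surj[OF finite_valid sub inj])
  have prp: "\<exists>Q c. pauli_valid n Q \<and> U * pauli_mat n Q = c \<cdot>\<^sub>m (pauli_mat n P * U)"
    if "pauli_valid n P" for P
  proof -
    note vP = that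
    have "P \<in> f ` {P. pauli_valid n P}" using surj vP by simp
    then obtain Q where vQ: "pauli_valid n Q" and fQ: "f Q = P" by blast
    obtain c where e: "U * pauli_mat n Q * ?W = c \<cdot>\<^sub>m pauli_mat n P" using fP[OF vQ] fQ by blast
    have UQ: "U * pauli_mat n Q \<in> carrier_mat ?N ?N" using Uc by simp
    have "U * pauli_mat n Q = (U * pauli_mat n Q) * (?W * U)" using WU UQ by simp
    also have "\<dots> = (U * pauli_mat n Q * ?W) * U" by (rule assoc_mult_mat[OF UQ Wc Uc, symmetric])
    also have "\<dots> = c \<cdot>\<^sub>m (pauli_mat n P * U)" unfolding e by (rule mult_smult_assoc_mat[OF pm_carrier Uc])
    finally show ?thesis using vQ by blast
  qed
  show ?thesis unfolding inv_cliff_def using Uc Wc WU prp by blast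
qed

lemma inv_cliff_one: "inv_cliff n (1\<^sub>m (2^n))"
  unfolding inv_cliff_def
proof (intro conjI allI impI)
  fix P assume "pauli_valid n P"
  moreover have "1\<^sub>m (2^n) * pauli_mat n P = 1 \<cdot>\<^sub>m (pauli_mat n P * 1\<^sub>m (2^n))" by simp
  ultimately show "\<exists>Q c. pauli_valid n Q \<and> 1\<^sub>m (2^n) * pauli_mat n Q = c \<cdot>\<^sub>m (pauli_mat n P * 1\<^sub>m (2^n))" by blast
qed (auto intro: bexI[of _ "1\<^sub>m (2^n)"])

lemma inv_cliff_mult: assumes U: "inv_cliff n U" and A: "inv_cliff n A" shows "inv_cliff n (U * A)"
proof -
  let ?N = "2^n::nat"
  obtain VU where Uc: "U \<in> carrier_mat ?N ?N" and VUc: "VU \<in> carrier_mat ?N ?N" and VUU: "VU * U = 1\<^sub>m ?N"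
    using U unfolding inv_cliff_def by blast
  obtain VA where Ac: "A \<in> carrier_mat ?N ?N" and VAc: "VA \<in> carrier_mat ?N ?N" and VAA: "VA * A = 1\<^sub>m ?N"
    using A unfolding inv_cliff_def by blast
  have inv: "(VA * VU) * (U * A) = 1\<^sub>m ?N"
  proof -
    have "(VA * VU) * (U * A) = VA * (VU * (U * A))" by (rule assoc_mult_mat[OF VAc VUc mult_carrier_mat[OF Uc Ac]])
    also have "VU * (U * A) = (VU * U) * A" by (rule assoc_mult_mat[OF VUc Uc Ac, symmetric])
    also have "\<dots> = A" using VUU Ac by simp
    finally show ?thesis using VAA by simp
  qed
  have prp: "\<exists>Q c. pauli_valid n Q \<and> (U * A) * pauli_mat n Q = c \<cdot>\<^sub>m (pauli_mat n P * (U * A))"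
    if "pauli_valid n P" for P
  proof -
    note vP = that
    obtain Q' c where vQ': "pauli_valid n Q'" and e: "U * pauli_mat n Q' = c \<cdot>\<^sub>m (pauli_mat n P * U)"
      using U vP unfolding inv_cliff_def by blast
    obtain Q c' where vQ: "pauli_valid n Q" and e': "A * pauli_mat n Q = c' \<cdot>\<^sub>m (pauli_mat n Q' * A)"
      using A vQ' unfolding inv_cliff_def by blast
    have "(U * A) * pauli_mat n Q = U * (A * pauli_mat n Q)" by (rule assoc_mult_mat[OF Uc Ac pm_carrier])
    also have "\<dots> = c' \<cdot>\<^sub>m (U * (pauli_mat n Q' * A))" unfolding e'
      by (rule mult_smult_distrib[OF Uc mult_carrier_mat[OF pm_carrier Ac]])
    also have "U * (pauli_mat n Q' * A) = (U * pauli_mat n Q') * A" by (rule assoc_mult_mat[OF Uc pm_carrier Ac, symmetric])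
    also have "\<dots> = c \<cdot>\<^sub>m ((pauli_mat n P * U) * A)" unfolding e
      by (rule mult_smult_assoc_mat[OF mult_carrier_mat[OF pm_carrier Uc] Ac])
    also have "(pauli_mat n P * U) * A = pauli_mat n P * (U * A)" by (rule assoc_mult_mat[OF pm_carrier Uc Ac])
    finally have "(U * A) * pauli_mat n Q = (c' * c) \<cdot>\<^sub>m (pauli_mat n P * (U * A))" by (simp add: smult_smult_m)
    then show ?thesis using vQ by blast
  qed
  show ?thesis unfolding inv_cliff_def
    using mult_carrier_mat[OF Uc Ac] mult_carrier_mat[OF VAc VUc] inv prp by blast
qed

lemma level_unitary_aux: assumes "\<forall>(k, opr) \<in> set xs. op_valid n opr" "inv_cliff n A"
  shows "inv_cliff n (foldl (\<lambda>A (k, opr). case opr of Gate U \<Rightarrow> if k = l then U * A else A | Meas _ \<Rightarrow> A) A xs)"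
  using assms
proof (induction xs arbitrary: A)
  case Nil then show ?case by simp
next
  case (Cons a xs)
  obtain k opr where a: "a = (k, opr)" by (cases a)
  have v: "op_valid n opr" using Cons.prems(1) a by auto
  have "inv_cliff n (case opr of Gate U \<Rightarrow> if k = l then U * A else A | Meas _ \<Rightarrow> A)"
  proof (cases opr)
    case (Gate U) then show ?thesis using v Cons.prems(2) clifford_inv inv_cliff_mult by auto
  next
    case (Meas S) then show ?thesis using Cons.prems(2) by simp
  qed
  then show ?case using Cons.IH Cons.prems(1) a by auto
qed

lemma level_unitary_inv: assumes "clifford_circuit n C" shows "inv_cliff n (level_unitary n C l)"
  unfolding level_unitary_def
  by (rule level_unitary_aux[OF _ inv_cliff_one]) (use assms in \<open>auto simp: clifford_circuit_def\<close>)



definition G :: "(nat \<Rightarrow> nat) \<Rightarrow> (nat \<Rightarrow> pauli) \<Rightarrow> (nat \<Rightarrow> bool) \<Rightarrow> nat list \<Rightarrow> fault" where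
  "G L S u js = foldr (\<lambda>j F. fault_mult (eta (L j) (if u j then S j else pauli_I)) F) js (\<lambda>_. pauli_I)"

lemma foo_G: "fault_of_outcomes C u = G (\<lambda>j. fst (meas_list C ! j) - 1) (\<lambda>j. snd (meas_list C ! j)) u [0..<num_meas C]"
  unfolding fault_of_outcomes_def G_def by simp

lemma G_Cons: "G L S u (j # js) = fault_mult (eta (L j) (if u j then S j else pauli_I)) (G L S u js)"
  unfolding G_def by simp

lemma G_Nil: "G L S u [] = (\<lambda>_. pauli_I)"
  unfolding G_def by simp

lemma G_valid: "(\<forall>j\<in>set js. pauli_valid n (S j)) \<Longrightarrow> pauli_valid n (G L S u js l)"
proof (induction js)
  case Nil then show ?case by (simp add: G_Nil valid_I)
next
  case (Cons j js)
  have "pauli_valid n (eta (L j) (if u j then S j else pauli_I) l)"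
    using Cons.prems by (simp add: eta_def valid_I)
  then show ?case using Cons by (simp add: G_Cons fault_mult_def valid_mult)
qed

lemma G_outside: "(\<forall>j\<in>set js. L j \<noteq> l) \<Longrightarrow> G L S u js l = pauli_I"
proof (induction js)
  case Nil then show ?case by (simp add: G_Nil)
next
  case (Cons j js)
  then show ?case by (simp add: G_Cons fault_mult_def eta_def pauli_mult_def pauli_I_def)
qed

lemma G_add: "G L S (bv_add u v) js = fault_mult (G L S u js) (G L S v js)"
proof (induction js)
  case Nil then show ?case by (simp add: G_Nil fault_mult_def pauli_mult_def pauli_I_def)
next
  case (Cons j js)
  show ?case unfolding G_Cons Cons.IH
    by (auto simp: fun_eq_iff fault_mult_def pauli_mult_def eta_def pauli_I_def bv_add_def)
qed

lemma G_point: assumes "distinct js" "j0 \<in> set js"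
  and "\<forall>j\<in>set js. j \<noteq> j0 \<longrightarrow> L j = L j0 \<longrightarrow> u j \<longrightarrow> S j q = (False, False)"
  shows "G L S u js (L j0) q = (if u j0 then S j0 q else (False, False))"
  using assms
proof (induction js)
  case Nil then show ?case by simp
next
  case (Cons j js)
  show ?case
  proof (cases "j = j0")
    case True
    then have "j0 \<notin> set js" using Cons.prems(1) by simp
    then have "G L S u js (L j0) q = (False, False)"
    proof -
      have "\<forall>j\<in>set js. j \<noteq> j0 \<longrightarrow> L j = L j0 \<longrightarrow> u j \<longrightarrow> S j q = (False, False)"
        using Cons.prems(3) by simp
      have "\<And>js'. set js' \<subseteq> set js \<Longrightarrow> G L S u js' (L j0) q = (False, False)"
      proof -
        fix js' assume "set js' \<subseteq> set js"
        then show "G L S u js' (L j0) q = (False, False)"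
        proof (induction js')
          case Nil then show ?case by (simp add: G_Nil pauli_I_def)
        next
          case (Cons a js')
          have "a \<noteq> j0" using Cons.prems \<open>j0 \<notin> set js\<close> by auto
          then have "L a = L j0 \<longrightarrow> u a \<longrightarrow> S a q = (False, False)"
            using Cons.prems \<open>\<forall>j\<in>set js. j \<noteq> j0 \<longrightarrow> L j = L j0 \<longrightarrow> u j \<longrightarrow> S j q = (False, False)\<close> by auto
          then show ?case using Cons by (auto simp: G_Cons fault_mult_def pauli_mult_def eta_def pauli_I_def)
        qed
      qed
      then show ?thesis by simp
    qed
    then show ?thesis using True by (auto simp: G_Cons fault_mult_def pauli_mult_def eta_def pauli_I_def)
  next
    case False
    then have ih: "G L S u js (L j0) q = (if u j0 then S j0 q else (False, False))"
      using Cons by simp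
    have "L j = L j0 \<longrightarrow> u j \<longrightarrow> S j q = (False, False)" using Cons.prems(3) False by simp
    then show ?thesis using ih
      by (auto simp: G_Cons fault_mult_def pauli_mult_def eta_def pauli_I_def)
  qed
qed



lemma bc_valid: assumes cc: "clifford_circuit n C" and v: "\<forall>l. pauli_valid n (F l)"
  shows "pauli_valid n (bc_aux n C F k)"
proof (induction k)
  case 0 then show ?case using v by simp
next
  case (Suc k)
  then show ?case using v conj_inv_prop[OF level_unitary_inv[OF cc] Suc] by (simp add: valid_mult)
qed

lemma pm4: "pauli_mult (pauli_mult a b) (pauli_mult c d) = pauli_mult (pauli_mult a c) (pauli_mult b d)"
  by (auto simp: fun_eq_iff pauli_mult_def)

lemma bc_mult: assumes cc: "clifford_circuit n C" and vF: "\<forall>l. pauli_valid n (F l)" and vG: "\<forall>l. pauli_valid n (H l)"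
  shows "bc_aux n C (fault_mult F H) k = pauli_mult (bc_aux n C F k) (bc_aux n C H k)"
proof (induction k)
  case 0 then show ?case by (simp add: fault_mult_def)
next
  case (Suc k)
  have "conj_inv n (level_unitary n C (depth C - k)) (bc_aux n C (fault_mult F H) k)
     = pauli_mult (conj_inv n (level_unitary n C (depth C - k)) (bc_aux n C F k))
                  (conj_inv n (level_unitary n C (depth C - k)) (bc_aux n C H k))"
    unfolding Suc by (rule conj_inv_mult[OF level_unitary_inv[OF cc] bc_valid[OF cc vF] bc_valid[OF cc vG]])
  then show ?case by (simp add: fault_mult_def pm4)
qed

lemma back_mult: assumes cc: "clifford_circuit n C" and vF: "\<forall>l. pauli_valid n (F l)" and vG: "\<forall>l. pauli_valid n (H l)"
  shows "back_cumulant n C (fault_mult F H) = fault_mult (back_cumulant n C F) (back_cumulant n C H)"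
proof (rule ext)
  fix l
  have "fault_mult (back_cumulant n C F) (back_cumulant n C H) l = pauli_mult (back_cumulant n C F l) (back_cumulant n C H l)"
    by (simp add: fault_mult_def)
  moreover have "fault_mult F H l = pauli_mult (F l) (H l)" by (simp add: fault_mult_def)
  ultimately show "back_cumulant n C (fault_mult F H) l = fault_mult (back_cumulant n C F) (back_cumulant n C H) l"
    unfolding back_cumulant_def by (simp add: bc_mult[OF cc vF vG])
qed

lemma bc_trivial: assumes cc: "clifford_circuit n C"
  and h: "\<forall>l\<le>depth C. bc_aux n C F (depth C - l) = pauli_I" and l: "l \<le> depth C"
  shows "F l = pauli_I"
proof (cases "l = depth C")
  case True then show ?thesis using h by fastforce
next
  case False
  define k where "k = depth C - l - 1"
  have k1: "depth C - Suc k = l" and k2: "Suc k = depth C - l" and k3: "k = depth C - Suc l"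
    using False l unfolding k_def by auto
  have "bc_aux n C F k = pauli_I" using h[rule_format, of "Suc l"] False l k3 by simp
  then have "bc_aux n C F (Suc k) = pauli_mult (F l) pauli_I"
    using conj_inv_I[OF level_unitary_inv[OF cc]] k1 by simp
  moreover have "bc_aux n C F (Suc k) = pauli_I" using h l k2 by simp
  ultimately show ?thesis by (simp add: pauli_mult_def pauli_I_def fun_eq_iff)
qed

lemma meas_mem: assumes "x \<in> set (meas_list C)"
  shows "\<exists>S. (fst x, Meas S) \<in> set C \<and> snd x = S"
proof -
  obtain l opr where "(l, opr) \<in> set C" "is_meas opr" "x = (l, meas_pauli opr)"
    using assms unfolding meas_list_def by auto
  then show ?thesis by (cases opr) auto
qed

lemma meas_facts: assumes cc: "clifford_circuit n C" and j: "j < num_meas C"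
  shows "1 \<le> fst (meas_list C ! j) \<and> fst (meas_list C ! j) \<le> depth C \<and> pauli_valid n (snd (meas_list C ! j))"
proof -
  have "meas_list C ! j \<in> set (meas_list C)" using j unfolding num_meas_def by simp
  then obtain S where m: "(fst (meas_list C ! j), Meas S) \<in> set C" and s: "snd (meas_list C ! j) = S"
    using meas_mem by blast
  have "fst (meas_list C ! j) \<le> depth C"
    unfolding depth_def using m by (intro Max_ge) force+
  then show ?thesis using cc m s unfolding clifford_circuit_def by fastforce
qed

lemma meas_disj: assumes cc: "clifford_circuit n C"
  and i: "i < num_meas C" and j: "j < num_meas C" and ij: "i \<noteq> j"
  and eq: "fst (meas_list C ! i) = fst (meas_list C ! j)"
  shows "pauli_supp (snd (meas_list C ! i)) \<inter> pauli_supp (snd (meas_list C ! j)) = {}"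
proof -
  define R where "R x y = (fst x = fst y \<longrightarrow> op_supp n (snd x) \<inter> op_supp n (snd y) = {})" for x y :: "nat \<times> operation"
  define R' where "R' x y = (fst x = fst y \<longrightarrow> pauli_supp (meas_pauli (snd x)) \<inter> pauli_supp (meas_pauli (snd y)) = {})" for x y :: "nat \<times> operation"
  define R'' where "R'' a b = (fst a = fst b \<longrightarrow> pauli_supp (snd a) \<inter> pauli_supp (snd b) = {})" for a b :: "nat \<times> pauli"
  have "sorted_wrt R C" unfolding sorted_wrt_iff_nth_less R_def
    using cc unfolding clifford_circuit_def by auto
  then have "sorted_wrt R (filter (\<lambda>(l, opr). is_meas opr) C)" by (rule sorted_wrt_filter)
  then have "sorted_wrt R' (filter (\<lambda>(l, opr). is_meas opr) C)"
  proof (rule sorted_wrt_mono_rel[rotated])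
    fix x y assume "x \<in> set (filter (\<lambda>(l, opr). is_meas opr) C)" "y \<in> set (filter (\<lambda>(l, opr). is_meas opr) C)" "R x y"
    then show "R' x y" unfolding R_def R'_def
      by (cases "snd x"; cases "snd y") (auto split: prod.splits)
  qed
  then have s: "sorted_wrt R'' (meas_list C)"
    unfolding meas_list_def sorted_wrt_map R''_def R'_def by (simp add: case_prod_beta)
  have sym: "\<And>a b. R'' a b \<Longrightarrow> R'' b a" unfolding R''_def by auto
  have "R'' (meas_list C ! i) (meas_list C ! j)"
  proof (cases "i < j")
    case True then show ?thesis using s j unfolding sorted_wrt_iff_nth_less num_meas_def by blast
  next
    case False then have "j < i" using ij by simp
    then show ?thesis using s i sym unfolding sorted_wrt_iff_nth_less num_meas_def by blast
  qed
  then show ?thesis using eq unfolding R''_def by simp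
qed



theorem mainTheorem9:
  fixes n :: nat and C :: circuit
  assumes "clifford_circuit n C"
    and "\<forall>j < num_meas C. snd (meas_list C ! j) \<noteq> pauli_I"
  shows "(\<forall>u \<in> bitvecs (num_meas C).
            fault_valid n (depth C) (back_cumulant n C (fault_of_outcomes C u)))
       \<and> (\<forall>u \<in> bitvecs (num_meas C). \<forall>v \<in> bitvecs (num_meas C).
            back_cumulant n C (fault_of_outcomes C (bv_add u v))
              = fault_mult (back_cumulant n C (fault_of_outcomes C u))
                           (back_cumulant n C (fault_of_outcomes C v)))
       \<and> inj_on (\<lambda>u. back_cumulant n C (fault_of_outcomes C u)) (bitvecs (num_meas C))"
proof -
  note cc = assms(1)
  define m where "m = num_meas C"
  define L where "L j = fst (meas_list C ! j) - 1" for j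
  define Sf where "Sf j = snd (meas_list C ! j)" for j
  have FG: "fault_of_outcomes C u = G L Sf u [0..<m]" for u
    unfolding foo_G L_def Sf_def m_def ..
  have vG: "\<forall>l. pauli_valid n (fault_of_outcomes C u l)" for u
    unfolding FG by (intro allI G_valid) (use meas_facts[OF cc] in \<open>auto simp: Sf_def m_def\<close>)
  have outG: "fault_of_outcomes C u l = pauli_I" if "depth C < l" for u l
    unfolding FG by (rule G_outside) (use meas_facts[OF cc] that in \<open>fastforce simp: L_def m_def\<close>)
  have P1: "fault_valid n (depth C) (back_cumulant n C (fault_of_outcomes C u))" for u
    unfolding fault_valid_def back_cumulant_def using bc_valid[OF cc vG] outG by auto
  have P2: "back_cumulant n C (fault_of_outcomes C (bv_add u v))
              = fault_mult (back_cumulant n C (fault_of_outcomes C u))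
                           (back_cumulant n C (fault_of_outcomes C v))" for u v
  proof -
    have "fault_of_outcomes C (bv_add u v) = fault_mult (fault_of_outcomes C u) (fault_of_outcomes C v)"
      unfolding FG by (rule G_add)
    then show ?thesis using back_mult[OF cc vG vG] by simp
  qed
  have P3: "inj_on (\<lambda>u. back_cumulant n C (fault_of_outcomes C u)) (bitvecs (num_meas C))"
  proof (rule inj_onI)
    fix u v assume u: "u \<in> bitvecs (num_meas C)" and v: "v \<in> bitvecs (num_meas C)"
      and eq: "back_cumulant n C (fault_of_outcomes C u) = back_cumulant n C (fault_of_outcomes C v)"
    define w where "w = bv_add u v"
    have "back_cumulant n C (fault_of_outcomes C w) = (\<lambda>_. pauli_I)"
      unfolding w_def P2 eq by (simp add: fun_eq_iff fault_mult_def pauli_mult_def pauli_I_def)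
    then have "\<forall>l\<le>depth C. bc_aux n C (fault_of_outcomes C w) (depth C - l) = pauli_I"
      unfolding back_cumulant_def by (metis (mono_tags, lifting))
    then have triv: "fault_of_outcomes C w l = pauli_I" for l
      using bc_trivial[OF cc] outG by (metis not_le)
    have wz: "\<not> w j0" if j0: "j0 < m" for j0
    proof
      assume wj0: "w j0"
      have "Sf j0 \<noteq> pauli_I" using assms(2) j0 unfolding Sf_def m_def by simp
      then obtain q where q: "Sf j0 q \<noteq> (False, False)" unfolding pauli_I_def by auto
      have "G L Sf w [0..<m] (L j0) q = (if w j0 then Sf j0 q else (False, False))"
      proof (rule G_point)
        show "\<forall>j\<in>set [0..<m]. j \<noteq> j0 \<longrightarrow> L j = L j0 \<longrightarrow> w j \<longrightarrow> Sf j q = (False, False)"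
        proof (intro ballI impI)
          fix j assume j: "j \<in> set [0..<m]" and ne: "j \<noteq> j0" and lj: "L j = L j0"
          have "fst (meas_list C ! j) = fst (meas_list C ! j0)"
            using lj meas_facts[OF cc, of j] meas_facts[OF cc, of j0] j j0 unfolding L_def m_def by auto
          then have "pauli_supp (Sf j) \<inter> pauli_supp (Sf j0) = {}"
            using meas_disj[OF cc, of j j0] j j0 ne unfolding Sf_def m_def by auto
          then show "Sf j q = (False, False)" using q unfolding pauli_supp_def by auto
        qed
      qed (use j0 in auto)
      then have "fault_of_outcomes C w (L j0) q = Sf j0 q" using wj0 unfolding FG by simp
      then show False using triv q by (simp add: pauli_I_def)
    qed
    show "u = v"
    proof
      fix j show "u j = v j"
      proof (cases "j < m")
        case True then show ?thesis using wz[OF True] unfolding w_def bv_add_def by auto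
      next
        case False then show ?thesis using u v unfolding bitvecs_def m_def by auto
      qed
    qed
  qed
  show ?thesis using P1 P2 P3 by blast
qed

end
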